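(* For $r\ge0$ let $\rho_D(r)$ be the unique positive solution $\rho$ of $\frac{(\rho-1)^3}{(2\rho-1)^2}=r^2$, and let $\rho(r)$ be the unique positive solution $\rho$ of $\frac{1}{\rho^2}\left(2e^{\rho-1}-1\right)=r^2+1$. Then $1+4r^2\le\rho_D(r)\le 2+4r^2$ for all $r\ge0$, and $\rho(r)=1+(1+o(1))\ln(1+r^2)$ as $r\to\infty$. *)

theory Defs
  imports Complex_Main "HOL-Library.Landau_Symbols"
begin

text \<open>rho_D(r): the unique positive solution of (rho-1)^3/(2 rho-1)^2 = r^2
  (the point rho = 1/2, where the left-hand side is undefined, is excluded explicitly).\<close>
definition rhoD :: "real \<Rightarrow> real" where
  "rhoD r = (THE \<rho>. \<rho> > 0 \<and> 2 * \<rho> - 1 \<noteq> 0 \<and> (\<rho> - 1) ^ 3 / (2 * \<rho> - 1) ^ 2 = r ^ 2)"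

definition rho :: "real \<Rightarrow> real" where
  "rho r = (THE \<rho>. \<rho> > 0 \<and> (1 / \<rho> ^ 2) * (2 * exp (\<rho> - 1) - 1) = r ^ 2 + 1)"

end

theory Submission
  imports Defs "HOL-Real_Asymp.Real_Asymp"
begin

definition gg :: "real \<Rightarrow> real" where "gg x = (1 / x ^ 2) * (2 * exp (x - 1) - 1)"
definition fD :: "real \<Rightarrow> real" where "fD x = (x - 1) ^ 3 / (2 * x - 1) ^ 2"

lemma h_pos: fixes x :: real assumes "x \<noteq> 1" shows "exp (x-1)*(x-2)+1 > 0"
proof (cases "x \<ge> 2")
  case True then show ?thesis by (smt (verit) exp_gt_zero mult_nonneg_nonneg)
next
  case False
  have "1 - (x-1) < exp (-(x-1))" using assms exp_minus_greater[of "x-1"] by simp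
  hence "(2 - x) * exp (x-1) < exp (-(x-1)) * exp (x-1)" using False by simp
  also have "\<dots> = 1" by (simp flip: exp_add)
  finally show ?thesis by (simp add: algebra_simps)
qed

lemma gg_deriv: assumes "x > 0" shows "DERIV gg x :> 2*(exp (x-1)*(x-2)+1)/x^3"
  unfolding gg_def[abs_def] using assms
  by (auto intro!: derivative_eq_intros simp: field_simps power2_eq_square power3_eq_cube)

lemma gg_cont: "a > 0 \<Longrightarrow> continuous_on {a..b} gg"
  unfolding gg_def[abs_def] by (auto intro!: continuous_intros)

lemma gg_mono_aux: assumes "0 < a" "a < b" "b \<le> 1 \<or> 1 \<le> a" shows "gg a < gg b"
proof (rule DERIV_pos_imp_increasing_open[OF assms(2)])
  fix x assume x: "a < x" "x < b"
  hence "x \<noteq> 1" "x > 0" using assms by auto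
  thus "\<exists>y. DERIV gg x :> y \<and> y > 0" using gg_deriv[of x] h_pos[of x]
    by (intro exI[of _ "2*(exp (x-1)*(x-2)+1)/x^3"]) auto
qed (use gg_cont assms in auto)

lemma gg_mono: assumes "0 < a" "a < b" shows "gg a < gg b"
proof -
  consider "b \<le> 1 \<or> 1 \<le> a" | "a < 1" "1 < b" by linarith
  thus ?thesis
  proof cases
    case 2 thus ?thesis using gg_mono_aux[of a 1] gg_mono_aux[of 1 b] assms by auto
  qed (use gg_mono_aux assms in auto)
qed

lemma fD_mono: assumes "1 \<le> a" "a < b" shows "fD a < fD b"
proof -
  define t where "t = a - 1"
  define v where "v = b - 1"
  have t: "0 \<le> t" "t < v" using assms by (auto simp: t_def v_def)
  have q: "t/(2*t+1) \<le> v/(2*v+1)" using t by (simp add: field_simps)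
  have q0: "0 \<le> t/(2*t+1)" using t by simp
  have "t * (t/(2*t+1))^2 < v * (v/(2*v+1))^2"
  proof (cases "t = 0")
    case True thus ?thesis using t by simp
  next
    case False
    have "t * (t/(2*t+1))^2 < v * (t/(2*t+1))^2" using t False by (intro mult_strict_right_mono) auto
    also have "\<dots> \<le> v * (v/(2*v+1))^2" using t q q0 by (intro mult_left_mono power_mono) auto
    finally show ?thesis .
  qed
  moreover have "fD a = t * (t/(2*t+1))^2" "fD b = v * (v/(2*v+1))^2"
    unfolding fD_def t_def v_def by (simp_all add: power2_eq_square power3_eq_cube field_simps)
  ultimately show ?thesis by simp
qed


lemma partA: fixes r :: real shows "1 + 4 * r ^ 2 \<le> rhoD r \<and> rhoD r \<le> 2 + 4 * r ^ 2"
proof -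
  define s where "s = r^2"
  have s0: "s \<ge> 0" unfolding s_def by simp
  have c: "continuous_on {1+4*s..2+4*s} fD" unfolding fD_def[abs_def] using s0
    by (intro continuous_intros) auto
  have l: "fD (1+4*s) \<le> s"
  proof -
    have "(4*s)^3 \<le> s * (8*s+1)^2" using s0 by (simp add: algebra_simps power2_eq_square power3_eq_cube)
    thus ?thesis unfolding fD_def using s0 by (simp add: divide_le_eq algebra_simps)
  qed
  have u: "s \<le> fD (2+4*s)"
  proof -
    have "s * (8*s+3)^2 \<le> (4*s+1)^3" using s0 by (simp add: algebra_simps power2_eq_square power3_eq_cube)
    thus ?thesis unfolding fD_def using s0 by (simp add: le_divide_eq algebra_simps)
  qed
  obtain x where x: "1+4*s \<le> x" "x \<le> 2+4*s" "fD x = s" using IVT'[of fD "1+4*s" s "2+4*s", OF l u _ c] by auto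
  have "rhoD r = x" unfolding rhoD_def
  proof (rule the_equality)
    show "x > 0 \<and> 2 * x - 1 \<noteq> 0 \<and> (x - 1) ^ 3 / (2 * x - 1) ^ 2 = r ^ 2"
    proof -
      have "x \<ge> 1" using x s0 by linarith
      thus ?thesis using x unfolding fD_def s_def by auto
    qed
  next
    fix y assume y: "y > 0 \<and> 2 * y - 1 \<noteq> 0 \<and> (y - 1) ^ 3 / (2 * y - 1) ^ 2 = r ^ 2"
    hence fy: "fD y = s" unfolding fD_def s_def by auto
    show "y = x"
    proof (cases "y < 1")
      case True
      have "0 < (y-1)*(y-1)" using True by (intro mult_neg_neg) auto
      hence "(y-1)^3 < 0" using True mult_pos_neg[of "(y-1)*(y-1)" "y-1"] by (simp add: power3_eq_cube)
      moreover have "(2*y-1)^2 > 0" using y by simp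
      ultimately have "fD y < 0" unfolding fD_def by (simp add: divide_neg_pos)
      thus ?thesis using fy s0 by simp
    next
      case False
      thus ?thesis using fD_mono[of y x] fD_mono[of x y] x fy s0 by (cases "y < x"; cases "x < y") auto
    qed
  qed
  thus ?thesis using x unfolding s_def by simp
qed

lemma partB: "(\<lambda>r. rho r - 1) \<sim>[at_top] (\<lambda>r. ln (1 + r ^ 2))"
proof (rule asymp_equivI')
  define L where "L = (\<lambda>r::real. ln (1 + r^2))"
  have ev: "eventually (\<lambda>r. L r \<ge> 6) at_top" unfolding L_def by real_asymp
  have bnd: "L r \<le> rho r - 1 \<and> rho r - 1 \<le> L r + ln ((1 + L r)^3)" if Lr: "L r \<ge> 6" for r
  proof -
    define s where "s = r^2"
    define l where "l = L r"
    have s0: "s \<ge> 0" unfolding s_def by simp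
    have es: "exp l = 1 + s" unfolding l_def L_def s_def by (simp add: add_pos_nonneg)
    have l6: "l \<ge> 6" using Lr l_def by simp
    define a where "a = 1 + l"
    define u where "u = 1 + l + ln ((1+l)^3)"
    have lnb: "0 \<le> ln ((1+l)^3)" "ln ((1+l)^3) \<le> 3 * l"
      using l6 ln_le_minus_one[of "1+l"] by (auto simp: ln_realpow)
    have au: "a \<le> u" "0 < a" using lnb l6 by (auto simp: a_def u_def)
    have ga: "gg a \<le> s + 1"
    proof -
      have "gg a = (2*s+1) / (1+l)^2" unfolding gg_def a_def using es by simp
      also have "\<dots> \<le> (2*s+1) / 2"
      proof -
        have "(1+l)*(1+l) \<ge> 7*7" using l6 by (intro mult_mono) auto
        thus ?thesis using l6 s0 by (intro divide_left_mono) (auto simp: power2_eq_square)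
      qed
      also have "\<dots> \<le> s + 1" using s0 by simp
      finally show ?thesis .
    qed
    have gu: "s + 1 \<le> gg u"
    proof -
      have eu: "exp (u - 1) = (1+s) * (1+l)^3" unfolding u_def using l6 es
        by (simp add: exp_add)
      have u0: "0 < u" using au by simp
      have "u^2 \<le> (1+4*l)^2" using lnb au unfolding u_def by (intro power_mono) auto
      also have "(1+4*l)^2 + 1 \<le> 2*(1+l)^3"
      proof -
        have "2*l + 10*l^2 \<le> 2*l^3" using l6
        proof -
          have "2*l + 10*l^2 \<le> 2*l*l + 10*l^2" using l6 by (simp add: power2_eq_square)
          also have "\<dots> = 12 * l^2" by (simp add: power2_eq_square)
          also have "\<dots> \<le> 2*l*l^2" using l6 by (intro mult_right_mono) auto
          finally show ?thesis by (simp add: power2_eq_square power3_eq_cube)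
        qed
        thus ?thesis by (simp add: algebra_simps power2_eq_square power3_eq_cube)
      qed
      finally have "u^2 \<le> 2*(1+l)^3 - 1" by simp
      hence "(s+1) * u^2 \<le> (s+1) * (2*(1+l)^3 - 1)" using s0 by (intro mult_left_mono) auto
      also have "\<dots> \<le> 2 * exp (u - 1) - 1" using s0 eu by (simp add: algebra_simps)
      finally show ?thesis unfolding gg_def using u0 by (simp add: field_simps)
    qed
    obtain x where x: "a \<le> x" "x \<le> u" "gg x = s + 1"
      using IVT'[of gg a "s+1" u, OF ga gu au(1) gg_cont[OF au(2)]] by auto
    have "rho r = x" unfolding rho_def
    proof (rule the_equality)
      show "x > 0 \<and> (1 / x ^ 2) * (2 * exp (x - 1) - 1) = r ^ 2 + 1"
        using x au unfolding gg_def s_def by auto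
    next
      fix y assume y: "y > 0 \<and> (1 / y ^ 2) * (2 * exp (y - 1) - 1) = r ^ 2 + 1"
      hence fy: "gg y = s + 1" unfolding gg_def s_def by auto
      show "y = x" using gg_mono[of y x] gg_mono[of x y] x fy y au by (cases "y < x"; cases "x < y") auto
    qed
    thus ?thesis using x unfolding a_def u_def l_def by simp
  qed
  have lim: "((\<lambda>r. 1 + ln ((1 + L r)^3) / L r) \<longlongrightarrow> 1) at_top" unfolding L_def by real_asymp
  show "((\<lambda>r. (rho r - 1) / ln (1 + r^2)) \<longlongrightarrow> 1) at_top"
  proof (rule tendsto_sandwich[OF _ _ tendsto_const lim])
    show "eventually (\<lambda>r. 1 \<le> (rho r - 1) / ln (1 + r^2)) at_top"
      using ev proof eventually_elim
      case (elim r) thus ?case using bnd[OF elim] unfolding L_def by simp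
    qed
    show "eventually (\<lambda>r. (rho r - 1) / ln (1 + r^2) \<le> 1 + ln ((1 + L r)^3) / L r) at_top"
      using ev proof eventually_elim
      case (elim r)
      have Lp: "L r > 0" using elim by simp
      have "(rho r - 1) / L r \<le> (L r + ln ((1 + L r)^3)) / L r"
        using bnd[OF elim] Lp by (intro divide_right_mono) auto
      also have "\<dots> = 1 + ln ((1 + L r)^3) / L r" using Lp by (simp add: field_simps)
      finally show ?case unfolding L_def .
    qed
  qed
qed

theorem lemma1:
  shows "(\<forall>r::real. r \<ge> 0 \<longrightarrow> 1 + 4 * r ^ 2 \<le> rhoD r \<and> rhoD r \<le> 2 + 4 * r ^ 2)
    \<and> (\<lambda>r. rho r - 1) \<sim>[at_top] (\<lambda>r. ln (1 + r ^ 2))"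
  using partA partB by blast

end
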